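(* Consider the following remote estimation problem. Let $a\in\mathbb{R}$ and $x(t+1)=ax(t)+w(t)$, $x(0)=x_0$, where $\{w(t)\}$ are i.i.d. with a symmetric unimodal density with finite second moment. A channel $c(t)\in\{0,1\}$ is a Markov chain with $\mathbb{P}(c(t+1)=1\mid c(t)=0)=p_{01}$, $\mathbb{P}(c(t+1)=1\mid c(t)=1)=p_{11}$, $p_{01},p_{11}\in(0,1)$. The sensor chooses $u(t)\in\{0,1\}$; the estimator receives $y(t)=x(t)$ if $u(t)=1$ and $c(t)=1$, and $y(t)=\Xi$ otherwise. The sensor learns $c(t)$ at time $t+1$ only if $u(t)=1$, and $b(t)$ denotes its conditional probability that $c(t)=1$ given its information (updated as $b(t+1)=p_{11}$ if $u(t)=1,c(t)=1$; $p_{01}$ if $u(t)=1,c(t)=0$; $p_{11}b(t)+p_{01}(1-b(t))$ if $u(t)=0$). For $\lambda>0$, $\beta\in(0,1)$ let the cost of a pair of strategies be $\mathbb{E}\big[\sum_{t\ge0}\beta^t((x(t)-\hat x(t))^2+\lambda u(t))\big]$. Define $v(-1)=x_0$, $v(t)=av(t-1)$ if $y(t)=\Xi$ and $v(t)=y(t)$ otherwise, and $e(t)=x(t)-av(t-1)$. Then for any scheduling strategy of the form $u(t)=f_t(x(t),b(t),y(0),\dots,y(t-1))$ and estimation strategy of the form $\hat x(t)=g_t(y(0),\dots,y(t))$, there exist equivalent scheduling and estimation strategies of the form $$u(t)=\tilde f_t\big(e(t),b(t),y(0),\dots,y(t-1)\big),\qquad \hat x(t)=\tilde g_t\big(y(0),\dots,y(t)\big)+v(t).$$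 Conversely, for any strategies of the latter form there exist equivalent strategies of the former form.
   Context: All maps are measurable. $\Xi$ is a symbol meaning no packet received. Two pairs of (scheduling, estimation) strategies are equivalent if they yield the same expected discounted cost $\mathbb{E}\big[\sum_{t\ge0}\beta^t((x(t)-\hat x(t))^2+\lambda u(t))\big]$. *)

theory Defs
  imports "HOL-Probability.Probability"
begin

text \<open>Observation space: real option, where None stands for the symbol Xi (no packet).
  Sigma algebra: generated by {None} and images Some ` B of Borel sets B.\<close>
definition obs_space :: "real option measure" where
  "obs_space = sigma UNIV (insert {None} ((\<lambda>B. Some ` B) ` sets borel))"

primrec xproc :: "real \<Rightarrow> real \<Rightarrow> (nat \<Rightarrow> 'a \<Rightarrow> real) \<Rightarrow> nat \<Rightarrow> 'a \<Rightarrow> real" where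
  "xproc a x0 w 0 \<omega> = x0"
| "xproc a x0 w (Suc t) \<omega> = a * xproc a x0 w t \<omega> + w t \<omega>"

text \<open>vprev a x0 h t = v(t-1) computed from the observations h 0, ..., h (t-1);
  v(-1) = x0, v(t) = a v(t-1) if y(t) = Xi, v(t) = y(t) otherwise.\<close>
primrec vprev :: "real \<Rightarrow> real \<Rightarrow> (nat \<Rightarrow> real option) \<Rightarrow> nat \<Rightarrow> real" where
  "vprev a x0 h 0 = x0"
| "vprev a x0 h (Suc t) = (case h t of None \<Rightarrow> a * vprev a x0 h t | Some y \<Rightarrow> y)"

text \<open>Scheduling strategy: f t z b h gives u(t) from (state-like argument z, belief b(t),
  observation history h = y(0..t-1) as a function on {..<t}).
  Estimation strategy: g t h gives the estimate from h = y(0..t) on {..t}.\<close>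
type_synonym sched = "nat \<Rightarrow> real \<Rightarrow> real \<Rightarrow> (nat \<Rightarrow> real option) \<Rightarrow> bool"
type_synonym estim = "nat \<Rightarrow> (nat \<Rightarrow> real option) \<Rightarrow> real"

definition sched_meas :: "sched \<Rightarrow> bool" where
  "sched_meas f \<longleftrightarrow> (\<forall>t. (\<lambda>(z, b, h). f t z b h) \<in>
     borel \<Otimes>\<^sub>M borel \<Otimes>\<^sub>M PiM {..<t} (\<lambda>_. obs_space) \<rightarrow>\<^sub>M count_space UNIV)"

definition est_meas :: "estim \<Rightarrow> bool" where
  "est_meas g \<longleftrightarrow> (\<forall>t. g t \<in> PiM {..<Suc t} (\<lambda>_. obs_space) \<rightarrow>\<^sub>M borel)"

text \<open>Closed loop under sensor map S: returns (b(t), y(0..t-1) restricted to {..<t}).\<close>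
primrec loop :: "real \<Rightarrow> real \<Rightarrow> real \<Rightarrow> real \<Rightarrow> real \<Rightarrow> (nat \<Rightarrow> 'a \<Rightarrow> real)
    \<Rightarrow> (nat \<Rightarrow> 'a \<Rightarrow> bool) \<Rightarrow> sched \<Rightarrow> nat \<Rightarrow> 'a \<Rightarrow> real \<times> (nat \<Rightarrow> real option)" where
  "loop a x0 p01 p11 b0 w c S 0 \<omega> = (b0, restrict (\<lambda>_. None) {..<0})"
| "loop a x0 p01 p11 b0 w c S (Suc t) \<omega> =
    (let b = fst (loop a x0 p01 p11 b0 w c S t \<omega>);
         h = snd (loop a x0 p01 p11 b0 w c S t \<omega>);
         xt = xproc a x0 w t \<omega>;
         u = S t xt b h
     in (if u then (if c t \<omega> then p11 else p01) else p11 * b + p01 * (1 - b),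
         h(t := (if u \<and> c t \<omega> then Some xt else None))))"

definition cost :: "'a measure \<Rightarrow> real \<Rightarrow> real \<Rightarrow> real \<Rightarrow> real \<Rightarrow> real \<Rightarrow> real \<Rightarrow> real
    \<Rightarrow> (nat \<Rightarrow> 'a \<Rightarrow> real) \<Rightarrow> (nat \<Rightarrow> 'a \<Rightarrow> bool) \<Rightarrow> sched \<Rightarrow> estim \<Rightarrow> ennreal" where
  "cost M a x0 p01 p11 b0 lam \<beta> w c S E =
    (\<integral>\<^sup>+ \<omega>. (\<Sum>t. ennreal (\<beta> ^ t *
        ((xproc a x0 w t \<omega> - E t (snd (loop a x0 p01 p11 b0 w c S (Suc t) \<omega>)))\<^sup>2
         + lam * of_bool (S t (xproc a x0 w t \<omega>)
                              (fst (loop a x0 p01 p11 b0 w c S t \<omega>))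
                              (snd (loop a x0 p01 p11 b0 w c S t \<omega>)))))) \<partial>M)"

text \<open>Strategies of the second form: u(t) = ft(e(t), b(t), y(0..t-1)) with
  e(t) = x(t) - a v(t-1), and xhat(t) = gt(y(0..t)) + v(t).\<close>
definition innov_sched :: "real \<Rightarrow> real \<Rightarrow> sched \<Rightarrow> sched" where
  "innov_sched a x0 ft = (\<lambda>t z b h. ft t (z - a * vprev a x0 h t) b h)"

definition innov_est :: "real \<Rightarrow> real \<Rightarrow> estim \<Rightarrow> estim" where
  "innov_est a x0 gt = (\<lambda>t h. gt t h + vprev a x0 h (Suc t))"

end

theory Submission
  imports Defs
begin

lemma sets_obs: "sets obs_space = sigma_sets UNIV (insert {None} ((\<lambda>B. Some ` B) ` sets borel))"
  unfolding obs_space_def by (rule sets_measure_of) auto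

lemma space_obs: "space obs_space = UNIV"
  unfolding obs_space_def by (rule space_measure_of) auto

lemma None_obs: "{None} \<in> sets obs_space"
  unfolding sets_obs by (rule sigma_sets.Basic) auto

lemma Some_obs: "B \<in> sets borel \<Longrightarrow> Some ` B \<in> sets obs_space"
  unfolding sets_obs by (rule sigma_sets.Basic) auto

lemma the_obs: "the \<in> borel_measurable obs_space"
proof (rule measurableI)
  fix A :: "real set" assume A: "A \<in> sets borel"
  have "the -` A \<inter> space obs_space = Some ` A \<union> (if the None \<in> A then {None} else {})"
    apply (auto simp: space_obs image_iff)
    apply (case_tac x; auto)+
    done
  also have "\<dots> \<in> sets obs_space" using A None_obs Some_obs[OF A] sets.Un[of "Some ` A" obs_space "{None}"] by auto
  finally show "the -` A \<inter> space obs_space \<in> sets obs_space" .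
qed auto

lemma vprev_meas: "{..<n} \<subseteq> I \<Longrightarrow> (\<lambda>h. vprev a x0 h n) \<in> borel_measurable (PiM I (\<lambda>_. obs_space))"
proof (induction n)
  case 0 then show ?case by simp
next
  case (Suc n)
  have nI: "n \<in> I" using Suc.prems by auto
  have comp: "(\<lambda>h. h n) \<in> PiM I (\<lambda>_. obs_space) \<rightarrow>\<^sub>M obs_space"
    using nI by (rule measurable_component_singleton)
  have eq: "(\<lambda>h. vprev a x0 h (Suc n)) = (\<lambda>h. if h n = None then a * vprev a x0 h n else the (h n))"
    by (auto split: option.split)
  have pr: "Measurable.pred (PiM I (\<lambda>_. obs_space)) (\<lambda>h. h n = None)"
    unfolding pred_def
  proof -
    have "{h \<in> space (PiM I (\<lambda>_. obs_space)). h n = None} = (\<lambda>h. h n) -` {None} \<inter> space (PiM I (\<lambda>_. obs_space))"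
      by auto
    also have "\<dots> \<in> sets (PiM I (\<lambda>_. obs_space))" using comp None_obs by (rule measurable_sets)
    finally show "{h \<in> space (PiM I (\<lambda>_. obs_space)). h n = None} \<in> sets (PiM I (\<lambda>_. obs_space))" .
  qed
  have ih: "(\<lambda>h. vprev a x0 h n) \<in> borel_measurable (PiM I (\<lambda>_. obs_space))"
    using Suc.IH Suc.prems by (meson lessThan_subset_iff le_SucI order_refl order_trans)
  show ?case unfolding eq
    apply (rule measurable_If[OF _ _ pr[unfolded pred_def]])
    using ih apply simp
    using measurable_comp[OF comp the_obs] by (simp add: o_def)
qed

lemma sched_conv:
  assumes "sched_meas f"
  shows "sched_meas (\<lambda>t z b h. f t (z + s * vprev a x0 h t) b h)"
  unfolding sched_meas_def
proof
  fix t :: nat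
  let ?P = "PiM {..<t} (\<lambda>_. obs_space)"
  have F: "(\<lambda>(z, b, h). f t z b h) \<in> borel \<Otimes>\<^sub>M borel \<Otimes>\<^sub>M ?P \<rightarrow>\<^sub>M count_space UNIV"
    using assms unfolding sched_meas_def by blast
  have V: "(\<lambda>h. vprev a x0 h t) \<in> borel_measurable ?P" by (rule vprev_meas) auto
  have T: "(\<lambda>(z, b, h). (z + s * vprev a x0 h t, b, h)) \<in> borel \<Otimes>\<^sub>M borel \<Otimes>\<^sub>M ?P \<rightarrow>\<^sub>M borel \<Otimes>\<^sub>M borel \<Otimes>\<^sub>M ?P"
    using V unfolding split_beta' by measurable
  have "(\<lambda>(z, b, h). f t z b h) \<circ> (\<lambda>(z, b, h). (z + s * vprev a x0 h t, b, h)) \<in> borel \<Otimes>\<^sub>M borel \<Otimes>\<^sub>M ?P \<rightarrow>\<^sub>M count_space UNIV"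
    using T F by (rule measurable_comp)
  then show "(\<lambda>(z, b, h). f t (z + s * vprev a x0 h t) b h) \<in> borel \<Otimes>\<^sub>M borel \<Otimes>\<^sub>M ?P \<rightarrow>\<^sub>M count_space UNIV"
    by (simp add: o_def split_beta')
qed

lemma est_conv:
  assumes "est_meas g"
  shows "est_meas (\<lambda>t h. g t h + s * vprev a x0 h (Suc t))"
  unfolding est_meas_def
proof
  fix t :: nat
  have "g t \<in> borel_measurable (PiM {..<Suc t} (\<lambda>_. obs_space))" using assms est_meas_def by blast
  moreover have "(\<lambda>h. vprev a x0 h (Suc t)) \<in> borel_measurable (PiM {..<Suc t} (\<lambda>_. obs_space))"
    by (rule vprev_meas) auto
  ultimately show "(\<lambda>h. g t h + s * vprev a x0 h (Suc t)) \<in> borel_measurable (PiM {..<Suc t} (\<lambda>_. obs_space))"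
    by measurable
qed

theorem lemma2:
  fixes M :: "'a measure" and a x0 p01 p11 b0 lam \<beta> :: real
    and w :: "nat \<Rightarrow> 'a \<Rightarrow> real" and c :: "nat \<Rightarrow> 'a \<Rightarrow> bool" and \<phi> :: "real \<Rightarrow> real"
  assumes "prob_space M"
    and "\<And>t. w t \<in> borel_measurable M"
    and "prob_space.indep_vars M (\<lambda>_. borel) w UNIV"
    and "\<And>t. distributed M lborel (w t) (\<lambda>z. ennreal (\<phi> z))"
    and "\<And>z. 0 \<le> \<phi> z" and "\<phi> \<in> borel_measurable borel"
    and "\<And>z. \<phi> (- z) = \<phi> z"
    and "\<And>z1 z2. 0 \<le> z1 \<Longrightarrow> z1 \<le> z2 \<Longrightarrow> \<phi> z2 \<le> \<phi> z1"
    and "integrable lborel (\<lambda>z. z\<^sup>2 * \<phi> z)"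
    and "\<And>t. c t \<in> M \<rightarrow>\<^sub>M count_space UNIV"
    and "0 < p01" and "p01 < 1" and "0 < p11" and "p11 < 1"
    and "0 \<le> b0" and "b0 \<le> 1"
    and "measure M {\<omega> \<in> space M. c 0 \<omega>} = b0"
    and "\<And>t s. measure M {\<omega> \<in> space M. c (Suc t) \<omega> \<and> (\<forall>i\<le>t. c i \<omega> = s i)}
              = (if s t then p11 else p01) * measure M {\<omega> \<in> space M. \<forall>i\<le>t. c i \<omega> = s i}"
    and "prob_space.indep_var M (PiM UNIV (\<lambda>_. borel)) (\<lambda>\<omega> t. w t \<omega>)
                                (PiM UNIV (\<lambda>_. borel)) (\<lambda>\<omega> t. of_bool (c t \<omega>) :: real)"
    and "0 < lam" and "0 < \<beta>" and "\<beta> < 1"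
  shows "(\<forall>f g. sched_meas f \<and> est_meas g \<longrightarrow>
            (\<exists>ft gt. sched_meas ft \<and> est_meas gt \<and>
               cost M a x0 p01 p11 b0 lam \<beta> w c f g
               = cost M a x0 p01 p11 b0 lam \<beta> w c (innov_sched a x0 ft) (innov_est a x0 gt)))
       \<and> (\<forall>ft gt. sched_meas ft \<and> est_meas gt \<longrightarrow>
            (\<exists>f g. sched_meas f \<and> est_meas g \<and>
               cost M a x0 p01 p11 b0 lam \<beta> w c (innov_sched a x0 ft) (innov_est a x0 gt)
               = cost M a x0 p01 p11 b0 lam \<beta> w c f g))"
proof (intro conjI allI impI)
  fix f g assume fg: "sched_meas f \<and> est_meas g"
  let ?ft = "\<lambda>t z b h. f t (z + a * vprev a x0 h t) b h"
  let ?gt = "\<lambda>t h. g t h + (-1) * vprev a x0 h (Suc t)"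
  have e1: "innov_sched a x0 ?ft = f" unfolding innov_sched_def by simp
  have e2: "innov_est a x0 ?gt = g" unfolding innov_est_def by simp
  show "\<exists>ft gt. sched_meas ft \<and> est_meas gt \<and>
               cost M a x0 p01 p11 b0 lam \<beta> w c f g
               = cost M a x0 p01 p11 b0 lam \<beta> w c (innov_sched a x0 ft) (innov_est a x0 gt)"
    apply (rule exI[of _ ?ft], rule exI[of _ ?gt])
    using fg sched_conv[of f a a x0] est_conv[of g "-1" a x0] e1 e2 by (simp only:)
next
  fix ft gt assume fg: "sched_meas ft \<and> est_meas gt"
  have m1: "sched_meas (innov_sched a x0 ft)"
    unfolding innov_sched_def using sched_conv[of ft "-a" a x0] fg by simp
  have m2: "est_meas (innov_est a x0 gt)"
    unfolding innov_est_def using est_conv[of gt 1 a x0] fg by simp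
  show "\<exists>f g. sched_meas f \<and> est_meas g \<and>
               cost M a x0 p01 p11 b0 lam \<beta> w c (innov_sched a x0 ft) (innov_est a x0 gt)
               = cost M a x0 p01 p11 b0 lam \<beta> w c f g"
    using m1 m2 by blast
qed

end
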